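(* Let $m\ge 1$, let $\mathbb{U},\mathbb{V},\mathbb{W}$ be finite-dimensional inner product spaces, and let $$\mathcal{P}=\sum_{|\alpha|\le m} A_\alpha(x)D^\alpha:\mathcal{D}'(\mathbb{R}^n,\mathbb{U})\to\mathcal{D}'(\mathbb{R}^n,\mathbb{V}),\qquad \mathcal{Q}=\sum_{|\beta|\le m} B_\beta(x)D^\beta:\mathcal{D}'(\mathbb{R}^n,\mathbb{V})\to\mathcal{D}'(\mathbb{R}^n,\mathbb{W})$$ be differential operators of order $m$ whose coefficients $A_\alpha:\mathbb{R}^n\to\mathrm{Hom}(\mathbb{U},\mathbb{V})$ and $B_\beta:\mathbb{R}^n\to\mathrm{Hom}(\mathbb{V},\mathbb{W})$ are continuous. Write $\mathcal{P}_m(x,\xi)=\sum_{|\alpha|=m}A_\alpha(x)\xi^\alpha$ and $\mathcal{Q}_m(x,\xi)=\sum_{|\beta|=m}B_\beta(x)\xi^\beta$ for the principal symbols. Then the sequence $\mathcal{D}'(\mathbb{R}^n,\mathbb{U})\xrightarrow{\mathcal{P}}\mathcal{D}'(\mathbb{R}^n,\mathbb{V})\xrightarrow{\mathcal{Q}}\mathcal{D}'(\mathbb{R}^n,\mathbb{W})$ is an elliptic complex (of order $m$) if and only if all of the following hold: (i) $\mathcal{Q}\mathcal{P}=0$; (ii) the sequence $\mathbb{U}\xrightarrow{\mathcal{P}_m(y,\zeta)}\mathbb{V}\xrightarrow{\mathcal{Q}_m(y,\zeta)}\mathbb{W}$ is exact (at $\mathbb{V}$) for some $y\in\mathbb{R}^n$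 and some $\zeta\in\mathbb{R}^n\setminus\{0\}$; (iii) for each multi-index $\gamma$ with $|\gamma|=2m$ and each $x$, $\sum_{\alpha+\beta=\gamma,\ |\alpha|=|\beta|=m} B_\beta(x)A_\alpha(x)=0$ as operators from $\mathbb{U}$ to $\mathbb{W}$; (iv) the matrix $\mathcal{P}_m(x,\xi)$ has constant rank for all $x\in\mathbb{R}^n$ and all $\xi\neq 0$; (v) the matrix $\mathcal{Q}_m(x,\xi)$ has constant rank for all $x\in\mathbb{R}^n$ and all $\xi\neq 0$.
   Context: $\mathcal{D}'(\mathbb{R}^n,\mathbb{U})$ denotes $\mathbb{U}$-valued distributions on $\mathbb{R}^n$; $D^\alpha$ is the partial derivative of multi-index $\alpha$ and $\xi^\alpha=\prod_i\xi_i^{\alpha_i}$. Definition: the sequence $\mathcal{D}'(\mathbb{R}^n,\mathbb{U})\xrightarrow{\mathcal{P}}\mathcal{D}'(\mathbb{R}^n,\mathbb{V})\xrightarrow{\mathcal{Q}}\mathcal{D}'(\mathbb{R}^n,\mathbb{W})$ of order-$m$ operators is an elliptic complex of order $m$ if $\mathcal{Q}\mathcal{P}=0$ and the symbol complex $\mathbb{U}\xrightarrow{\mathcal{P}_m(x,\xi)}\mathbb{V}\xrightarrow{\mathcal{Q}_m(x,\xi)}\mathbb{W}$ is exact at $\mathbb{V}$ (i.e. $\operatorname{im}\mathcal{P}_m(x,\xi)=\ker\mathcal{Q}_m(x,\xi)$) for every $x\in\mathbb{R}^n$ and every $\xi\in\mathbb{R}^n\setminus\{0\}$. *)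

theory Defs
  imports "HOL-Analysis.Analysis"
begin

(* Multi-indices on R^n = real^'n are functions 'n => nat. *)
definition mlen :: "('n::finite \<Rightarrow> nat) \<Rightarrow> nat" where
  "mlen \<alpha> = (\<Sum>i\<in>UNIV. \<alpha> i)"

definition mpow :: "real^'n::finite \<Rightarrow> ('n \<Rightarrow> nat) \<Rightarrow> real" where
  "mpow \<xi> \<alpha> = (\<Prod>i\<in>UNIV. (\<xi> $ i) ^ \<alpha> i)"

definition pd :: "'n::finite \<Rightarrow> (real^'n \<Rightarrow> 'a::real_normed_vector) \<Rightarrow> (real^'n \<Rightarrow> 'a)" where
  "pd i f = (\<lambda>x. frechet_derivative f (at x) (axis i 1))"

definition mi_list :: "('n::finite \<Rightarrow> nat) \<Rightarrow> 'n list" where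
  "mi_list \<alpha> = (SOME l. \<forall>i. count_list l i = \<alpha> i)"

(* D^\<alpha> (on C^\<infinity> functions the order of differentiation is irrelevant) *)
definition Dmi :: "('n::finite \<Rightarrow> nat) \<Rightarrow> (real^'n \<Rightarrow> 'a::real_normed_vector) \<Rightarrow> (real^'n \<Rightarrow> 'a)" where
  "Dmi \<alpha> f = foldr pd (mi_list \<alpha>) f"

fun Ck :: "nat \<Rightarrow> (real^'n::finite \<Rightarrow> 'a::real_normed_vector) \<Rightarrow> bool" where
  "Ck 0 f = continuous_on UNIV f"
| "Ck (Suc k) f = (continuous_on UNIV f \<and> (\<forall>x. f differentiable (at x)) \<and> (\<forall>i. Ck k (pd i f)))"

definition smooth_fun :: "(real^'n::finite \<Rightarrow> 'a::real_normed_vector) \<Rightarrow> bool" where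
  "smooth_fun f = (\<forall>k. Ck k f)"

definition diff_op :: "(('n::finite \<Rightarrow> nat) \<Rightarrow> real^'n \<Rightarrow> 'u::real_normed_vector \<Rightarrow>\<^sub>L 'v::real_normed_vector)
    \<Rightarrow> nat \<Rightarrow> (real^'n \<Rightarrow> 'u) \<Rightarrow> (real^'n \<Rightarrow> 'v)" where
  "diff_op A m u = (\<lambda>x. \<Sum>\<alpha>\<in>{\<alpha>. mlen \<alpha> \<le> m}. blinfun_apply (A \<alpha> x) (Dmi \<alpha> u x))"

definition principal_symbol :: "(('n::finite \<Rightarrow> nat) \<Rightarrow> real^'n \<Rightarrow> 'u::real_normed_vector \<Rightarrow>\<^sub>L 'v::real_normed_vector)
    \<Rightarrow> nat \<Rightarrow> real^'n \<Rightarrow> real^'n \<Rightarrow> 'u \<Rightarrow>\<^sub>L 'v" where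
  "principal_symbol A m x \<xi> = (\<Sum>\<alpha>\<in>{\<alpha>. mlen \<alpha> = m}. mpow \<xi> \<alpha> *\<^sub>R A \<alpha> x)"

(* QP = 0, read classically: Q(Pu) = 0 whenever u is C^\<infinity> and Pu is C^m
   (so that Q(Pu) is classically defined). *)
definition comp_zero ::
  "(('n::finite \<Rightarrow> nat) \<Rightarrow> real^'n \<Rightarrow> 'u::real_normed_vector \<Rightarrow>\<^sub>L 'v::real_normed_vector)
   \<Rightarrow> (('n \<Rightarrow> nat) \<Rightarrow> real^'n \<Rightarrow> 'v \<Rightarrow>\<^sub>L 'w::real_normed_vector) \<Rightarrow> nat \<Rightarrow> bool" where
  "comp_zero A B m = (\<forall>u. smooth_fun u \<and> Ck m (diff_op A m u) \<longrightarrow> diff_op B m (diff_op A m u) = (\<lambda>x. 0))"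

definition exact_at_mid :: "('u::real_normed_vector \<Rightarrow>\<^sub>L 'v::real_normed_vector) \<Rightarrow> ('v \<Rightarrow>\<^sub>L 'w::real_normed_vector) \<Rightarrow> bool" where
  "exact_at_mid f g = (range (blinfun_apply f) = {v. blinfun_apply g v = 0})"

definition lrank :: "('u::euclidean_space \<Rightarrow>\<^sub>L 'v::euclidean_space) \<Rightarrow> nat" where
  "lrank f = dim (range (blinfun_apply f))"

definition elliptic_complex ::
  "(('n::finite \<Rightarrow> nat) \<Rightarrow> real^'n \<Rightarrow> 'u::euclidean_space \<Rightarrow>\<^sub>L 'v::euclidean_space)
   \<Rightarrow> (('n \<Rightarrow> nat) \<Rightarrow> real^'n \<Rightarrow> 'v \<Rightarrow>\<^sub>L 'w::euclidean_space) \<Rightarrow> nat \<Rightarrow> bool" where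
  "elliptic_complex A B m = (comp_zero A B m \<and>
     (\<forall>x \<xi>. \<xi> \<noteq> 0 \<longrightarrow> exact_at_mid (principal_symbol A m x \<xi>) (principal_symbol B m x \<xi>)))"

end

theory Submission
  imports Defs "HOL-Computational_Algebra.Primes"
begin


lemma finite_mlen_le: "finite {\<alpha>::'n::finite\<Rightarrow>nat. mlen \<alpha> \<le> m}"
proof -
  have "{\<alpha>::'n\<Rightarrow>nat. mlen \<alpha> \<le> m} \<subseteq> PiE UNIV (\<lambda>_. {..m})"
  proof
    fix \<alpha> :: "'n \<Rightarrow> nat" assume "\<alpha> \<in> {\<alpha>. mlen \<alpha> \<le> m}"
    then have "\<alpha> i \<le> m" for i
      unfolding mlen_def using member_le_sum[of i UNIV \<alpha>] by fastforce
    then show "\<alpha> \<in> PiE UNIV (\<lambda>_. {..m})" by auto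
  qed
  then show ?thesis by (rule finite_subset) (simp add: finite_PiE)
qed

lemma finite_mlen_eq: "finite {\<alpha>::'n::finite\<Rightarrow>nat. mlen \<alpha> = m}"
  by (rule finite_subset[OF _ finite_mlen_le[of m]]) auto

lemma rank_decomp:
  fixes f :: "'a::euclidean_space \<Rightarrow> 'b::euclidean_space"
  assumes lf: "linear f"
  defines "K \<equiv> {x. f x = 0}"
  defines "E \<equiv> {y. \<forall>x\<in>K. orthogonal x y}"
  shows "subspace E" "closed E" "\<forall>x\<in>E. f x = 0 \<longrightarrow> x = 0"
    "dim (range f) = dim E" "dim (range f) + dim K = DIM('a)"
proof -
  have sK: "subspace K" unfolding K_def using lf by (simp add: linear_subspace_kernel)
  show sE: "subspace E" unfolding E_def by (rule subspace_orthogonal_to_vectors)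
  then show "closed E" by (rule closed_subspace)
  show inj: "\<forall>x\<in>E. f x = 0 \<longrightarrow> x = 0"
    unfolding E_def K_def by (auto simp: orthogonal_def)
  have img: "f ` E = range f"
  proof
    show "range f \<subseteq> f ` E"
    proof
      fix w assume "w \<in> range f"
      then obtain v where v: "w = f v" by auto
      obtain y z where "v = y + z" "y \<in> span K" and orth: "\<And>w. w \<in> span K \<Longrightarrow> orthogonal z w"
        using orthogonal_subspace_decomp_exists [of K v] by metis
      have "y \<in> K" using \<open>y \<in> span K\<close> sK by (metis span_eq_iff)
      then have "f y = 0" unfolding K_def by auto
      have "z \<in> E" unfolding E_def using orth sK span_superset orthogonal_commute by blast
      moreover have "w = f z" using v \<open>v = y + z\<close> \<open>f y = 0\<close> linear_add[OF lf] by simp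
      ultimately show "w \<in> f ` E" by auto
    qed
  qed auto
  have "inj_on f (span E)"
    using inj sE linear_diff[OF lf] unfolding inj_on_def
    by (metis (no_types, lifting) span_eq_iff subspace_diff eq_iff_diff_eq_0)
  then have "dim (f ` E) = dim E" using dim_image_eq[OF lf] by blast
  then show de: "dim (range f) = dim E" using img by simp
  have "dim {y \<in> UNIV. \<forall>x \<in> K. orthogonal x y} + dim K = dim (UNIV::'a set)"
    by (rule dim_subspace_orthogonal_to_vectors) (auto simp: sK)
  then show "dim (range f) + dim K = DIM('a)" using de unfolding E_def by simp
qed



lemma rank_lsc:
  fixes f :: "'a::euclidean_space \<Rightarrow>\<^sub>L 'b::euclidean_space"
  shows "\<exists>\<delta>>0. \<forall>g. norm (g - f) < \<delta> \<longrightarrow> lrank f \<le> lrank g"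
proof -
  have lf: "linear (blinfun_apply f)" by (simp add: blinfun.bounded_linear_right bounded_linear.linear)
  define K where "K = {x. blinfun_apply f x = 0}"
  define E where "E = {y. \<forall>x\<in>K. orthogonal x y}"
  note rd = rank_decomp[OF lf, folded K_def, folded E_def]
  obtain e where e: "e > 0" "\<forall>x\<in>E. norm (blinfun_apply f x) \<ge> e * norm x"
    using injective_imp_isometric[OF rd(2) rd(1) _ rd(3)] blinfun.bounded_linear_right by blast
  show ?thesis
  proof (intro exI[of _ e] conjI allI impI)
    fix g assume ng: "norm (g - f) < e"
    have lg: "linear (blinfun_apply g)" by (simp add: blinfun.bounded_linear_right bounded_linear.linear)
    have z: "x = 0" if "x \<in> E" "blinfun_apply g x = 0" for x
    proof (rule ccontr)
      assume "x \<noteq> 0"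
      then have nx: "norm x > 0" by simp
      have "norm (blinfun_apply f x) = norm (blinfun_apply (g - f) x)"
        using that by (simp add: blinfun.diff_left)
      also have "\<dots> \<le> norm (g - f) * norm x" by (rule norm_blinfun)
      also have "\<dots> < e * norm x" using ng nx by simp
      finally show False using e that by force
    qed
    have "inj_on (blinfun_apply g) (span E)"
      using z rd(1) unfolding inj_on_def
      by (metis (no_types, lifting) span_eq_iff subspace_diff eq_iff_diff_eq_0 linear_diff[OF lg])
    then have "dim (blinfun_apply g ` E) = dim E" using dim_image_eq[OF lg] by blast
    moreover have "dim (blinfun_apply g ` E) \<le> dim (range (blinfun_apply g))"
      by (rule dim_subset) auto
    ultimately show "lrank f \<le> lrank g" unfolding lrank_def using rd(4) by simp
  qed (use e in simp)
qed

lemma exact_comp: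
  assumes "exact_at_mid f g" shows "g o\<^sub>L f = 0"
  using assms unfolding exact_at_mid_def by (intro blinfun_eqI) auto

lemma exact_iff:
  fixes f :: "'u::euclidean_space \<Rightarrow>\<^sub>L 'v::euclidean_space" and g :: "'v \<Rightarrow>\<^sub>L 'w::euclidean_space"
  assumes "g o\<^sub>L f = 0"
  shows "exact_at_mid f g \<longleftrightarrow> lrank f + lrank g = DIM('v)"
proof -
  have lf: "linear (blinfun_apply f)" by (simp add: blinfun.bounded_linear_right bounded_linear.linear)
  have lg: "linear (blinfun_apply g)" by (simp add: blinfun.bounded_linear_right bounded_linear.linear)
  define K where "K = {x. blinfun_apply g x = 0}"
  have "blinfun_apply g (blinfun_apply f x) = 0" for x
    using arg_cong[OF assms, of "\<lambda>h. blinfun_apply h x"] by simp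
  then have sub: "range (blinfun_apply f) \<subseteq> K" unfolding K_def by auto
  have rn: "lrank g + dim K = DIM('v)" using rank_decomp(5)[OF lg] unfolding lrank_def K_def .
  have sK: "subspace K" unfolding K_def using lg by (simp add: linear_subspace_kernel)
  have sR: "subspace (range (blinfun_apply f))" using lf by (simp add: subspace_UNIV linear_subspace_image)
  show ?thesis
  proof
    assume "exact_at_mid f g"
    then have "range (blinfun_apply f) = K" unfolding exact_at_mid_def K_def .
    then show "lrank f + lrank g = DIM('v)" using rn unfolding lrank_def by simp
  next
    assume "lrank f + lrank g = DIM('v)"
    then have "dim (range (blinfun_apply f)) \<ge> dim K" using rn unfolding lrank_def by simp
    then have "range (blinfun_apply f) = K" using subspace_dim_equal[OF sR sK sub] by simp
    then show "exact_at_mid f g" unfolding exact_at_mid_def K_def .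
  qed
qed



lemma vander_zero:
  fixes c :: "'i \<Rightarrow> 'a::real_vector" and M :: "'i \<Rightarrow> real"
  assumes "finite G" "inj_on M G" "\<forall>s::nat. (\<Sum>g\<in>G. M g ^ s *\<^sub>R c g) = 0"
  shows "\<forall>g\<in>G. c g = 0"
  using assms
proof (induction G arbitrary: c rule: finite_induct)
  case empty then show ?case by simp
next
  case (insert g0 F)
  define c' where "c' g = (M g - M g0) *\<^sub>R c g" for g
  have h: "M g0 ^ s *\<^sub>R c g0 + (\<Sum>g\<in>F. M g ^ s *\<^sub>R c g) = 0" for s
    using insert.prems(2) insert.hyps by (simp add: sum.insert)
  have "(\<Sum>g\<in>F. M g ^ s *\<^sub>R c' g) = 0" for s
  proof -
    have h1: "(\<Sum>g\<in>F. M g ^ Suc s *\<^sub>R c g) = - (M g0 ^ Suc s *\<^sub>R c g0)"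
      using h[of "Suc s"] by (metis add.commute eq_neg_iff_add_eq_0)
    have h2: "(\<Sum>g\<in>F. M g ^ s *\<^sub>R c g) = - (M g0 ^ s *\<^sub>R c g0)"
      using h[of s] by (metis add.commute eq_neg_iff_add_eq_0)
    have "(\<Sum>g\<in>F. M g ^ s *\<^sub>R c' g) = (\<Sum>g\<in>F. M g ^ Suc s *\<^sub>R c g) - M g0 *\<^sub>R (\<Sum>g\<in>F. M g ^ s *\<^sub>R c g)"
      by (simp add: c'_def scaleR_sum_right sum_subtractf[symmetric] algebra_simps)
    also have "\<dots> = - (M g0 ^ Suc s *\<^sub>R c g0) - M g0 *\<^sub>R (- (M g0 ^ s *\<^sub>R c g0))"
      by (simp only: h1 h2)
    also have "\<dots> = 0" by simp
    finally show ?thesis .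
  qed
  moreover have "inj_on M F" using insert.prems(1) by (simp add: inj_on_insert)
  ultimately have "\<forall>g\<in>F. c' g = 0" using insert.IH by blast
  moreover have "M g \<noteq> M g0" if "g \<in> F" for g
    using insert.prems(1) insert.hyps that by (auto simp: inj_on_def)
  ultimately have F0: "\<forall>g\<in>F. c g = 0" unfolding c'_def by simp
  then have "c g0 = 0" using h[of 0] by simp
  with F0 show ?case by simp
qed

lemma mpow_add: "mpow \<xi> (\<lambda>i. \<alpha> i + \<beta> i) = mpow \<xi> \<alpha> * mpow \<xi> \<beta>"
  unfolding mpow_def by (simp add: power_add prod.distrib)

lemma mlen_add: "mlen (\<lambda>i. \<alpha> i + \<beta> i) = mlen \<alpha> + mlen \<beta>"
  unfolding mlen_def by (simp add: sum.distrib)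

lemma symbol_comp:
  fixes A :: "('n::finite \<Rightarrow> nat) \<Rightarrow> real^'n \<Rightarrow> 'u::real_normed_vector \<Rightarrow>\<^sub>L 'v::real_normed_vector"
    and B :: "('n \<Rightarrow> nat) \<Rightarrow> real^'n \<Rightarrow> 'v \<Rightarrow>\<^sub>L 'w::real_normed_vector"
  shows "principal_symbol B m x \<xi> o\<^sub>L principal_symbol A m x \<xi> =
    (\<Sum>\<gamma>\<in>{\<gamma>. mlen \<gamma> = 2 * m}. mpow \<xi> \<gamma> *\<^sub>R
        (\<Sum>(\<alpha>, \<beta>)\<in>{(\<alpha>, \<beta>). (\<lambda>i. \<alpha> i + \<beta> i) = \<gamma> \<and> mlen \<alpha> = m \<and> mlen \<beta> = m}.
            B \<beta> x o\<^sub>L A \<alpha> x))"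
proof -
  let ?S = "{\<alpha>::'n\<Rightarrow>nat. mlen \<alpha> = m}"
  let ?T = "{\<gamma>::'n\<Rightarrow>nat. mlen \<gamma> = 2 * m}"
  let ?g = "\<lambda>(\<alpha>::'n\<Rightarrow>nat, \<beta>::'n\<Rightarrow>nat). (\<lambda>i. \<alpha> i + \<beta> i)"
  let ?h = "\<lambda>(\<alpha>, \<beta>). mpow \<xi> (\<lambda>i. \<alpha> i + \<beta> i) *\<^sub>R (B \<beta> x o\<^sub>L A \<alpha> x)"
  have fS: "finite ?S" by (rule finite_mlen_eq)
  have "principal_symbol B m x \<xi> o\<^sub>L principal_symbol A m x \<xi> =
      (\<Sum>\<alpha>\<in>?S. \<Sum>\<beta>\<in>?S. (mpow \<xi> \<alpha> * mpow \<xi> \<beta>) *\<^sub>R (B \<beta> x o\<^sub>L A \<alpha> x))"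
    unfolding principal_symbol_def
    by (simp add: bounded_bilinear.sum_left[OF bounded_bilinear_blinfun_compose]
        bounded_bilinear.sum_right[OF bounded_bilinear_blinfun_compose]
        bounded_bilinear.scaleR_left[OF bounded_bilinear_blinfun_compose]
        bounded_bilinear.scaleR_right[OF bounded_bilinear_blinfun_compose] scaleR_sum_right)
  also have "\<dots> = (\<Sum>\<alpha>\<in>?S. \<Sum>\<beta>\<in>?S. ?h (\<alpha>, \<beta>))"
    by (simp add: mpow_add)
  also have "\<dots> = sum ?h (?S \<times> ?S)"
    by (simp add: sum.cartesian_product)
  also have "\<dots> = (\<Sum>\<gamma>\<in>?T. sum ?h {p \<in> ?S \<times> ?S. ?g p = \<gamma>})"
    by (rule sum.group[symmetric]) (auto simp: fS finite_mlen_eq mlen_add)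
  also have "\<dots> = (\<Sum>\<gamma>\<in>?T. mpow \<xi> \<gamma> *\<^sub>R
        (\<Sum>(\<alpha>, \<beta>)\<in>{(\<alpha>, \<beta>). (\<lambda>i. \<alpha> i + \<beta> i) = \<gamma> \<and> mlen \<alpha> = m \<and> mlen \<beta> = m}.
            B \<beta> x o\<^sub>L A \<alpha> x))"
  proof (rule sum.cong[OF refl])
    fix \<gamma> assume "\<gamma> \<in> ?T"
    have e: "{p \<in> ?S \<times> ?S. ?g p = \<gamma>} = {(\<alpha>, \<beta>). (\<lambda>i. \<alpha> i + \<beta> i) = \<gamma> \<and> mlen \<alpha> = m \<and> mlen \<beta> = m}"
      by auto
    show "sum ?h {p \<in> ?S \<times> ?S. ?g p = \<gamma>} = mpow \<xi> \<gamma> *\<^sub>R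
        (\<Sum>(\<alpha>, \<beta>)\<in>{(\<alpha>, \<beta>). (\<lambda>i. \<alpha> i + \<beta> i) = \<gamma> \<and> mlen \<alpha> = m \<and> mlen \<beta> = m}.
            B \<beta> x o\<^sub>L A \<alpha> x)"
      unfolding e scaleR_sum_right by (rule sum.cong[OF refl]) auto
  qed
  finally show ?thesis .
qed



lemma prime_inj: "\<exists>p::'n::finite \<Rightarrow> nat. inj p \<and> (\<forall>i. prime (p i))"
proof -
  obtain k :: "'n \<Rightarrow> nat" and n where k: "inj k"
    using finite_imp_inj_to_nat_seg[of "UNIV::'n set"] by auto
  let ?P = "{q::nat. prime q}"
  have inf: "infinite ?P" using primes_infinite by simp
  have "inj (enumerate ?P)" using strict_mono_enumerate[OF inf] strict_mono_imp_inj_on by blast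
  then have "inj (enumerate ?P \<circ> k)" using k by (simp add: inj_compose)
  moreover have "\<forall>i. prime ((enumerate ?P \<circ> k) i)" using enumerate_in_set[OF inf] by simp
  ultimately show ?thesis by blast
qed

lemma prodpow_inj:
  fixes p :: "'n::finite \<Rightarrow> nat"
  assumes "inj p" "\<forall>i. prime (p i)"
  shows "inj (\<lambda>\<gamma>::'n\<Rightarrow>nat. \<Prod>i\<in>UNIV. p i ^ \<gamma> i)"
proof (rule injI)
  have mult: "multiplicity (p j) (\<Prod>i\<in>UNIV. p i ^ \<gamma> i) = \<gamma> j" for \<gamma> :: "'n \<Rightarrow> nat" and j
  proof -
    have "(\<Prod>q\<in>range p. q ^ \<gamma> (inv p q)) = (\<Prod>i\<in>UNIV. p i ^ \<gamma> (inv p (p i)))"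
      using prod.reindex[of p UNIV "\<lambda>q. q ^ \<gamma> (inv p q)"] assms(1) by simp
    also have "\<dots> = (\<Prod>i\<in>UNIV. p i ^ \<gamma> i)" using assms(1) by simp
    finally have e: "(\<Prod>i\<in>UNIV. p i ^ \<gamma> i) = (\<Prod>q\<in>range p. q ^ \<gamma> (inv p q))" ..
    show ?thesis unfolding e
      using multiplicity_prod_prime_powers[of "range p" "p j" "\<lambda>q. \<gamma> (inv p q)"] assms by auto
  qed
  fix \<gamma> \<delta> :: "'n \<Rightarrow> nat" assume "(\<Prod>i\<in>UNIV. p i ^ \<gamma> i) = (\<Prod>i\<in>UNIV. p i ^ \<delta> i)"
  then have "\<gamma> j = \<delta> j" for j using mult[of j \<gamma>] mult[of j \<delta>] by simp
  then show "\<gamma> = \<delta>" by auto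
qed

lemma coeff_zero:
  fixes C :: "('n::finite \<Rightarrow> nat) \<Rightarrow> 'a::real_vector"
  assumes "finite T" "\<And>\<xi>::real^'n. (\<forall>i. \<xi> $ i > 0) \<Longrightarrow> (\<Sum>\<gamma>\<in>T. mpow \<xi> \<gamma> *\<^sub>R C \<gamma>) = 0"
  shows "\<forall>\<gamma>\<in>T. C \<gamma> = 0"
proof -
  obtain p :: "'n \<Rightarrow> nat" where p: "inj p" "\<forall>i. prime (p i)" using prime_inj by blast
  define M where "M \<gamma> = real (\<Prod>i\<in>UNIV. p i ^ \<gamma> i)" for \<gamma> :: "'n \<Rightarrow> nat"
  have injM: "inj_on M T"
  proof (rule inj_onI)
    fix x y assume "M x = M y"
    then have "(\<Prod>i\<in>UNIV. p i ^ x i) = (\<Prod>i\<in>UNIV. p i ^ y i)" unfolding M_def by (simp only: of_nat_eq_iff)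
    then show "x = y" using prodpow_inj[OF p] by (simp add: inj_def)
  qed
  have "(\<Sum>\<gamma>\<in>T. M \<gamma> ^ s *\<^sub>R C \<gamma>) = 0" for s
  proof -
    define \<xi> where "\<xi> = (\<chi> i. real (p i) ^ s :: real^'n)"
    have pos: "\<forall>i. \<xi> $ i > 0" unfolding \<xi>_def using p(2) prime_gt_0_nat by (simp add: vec_lambda_beta)
    have pc: "(a ^ s) ^ g = (a ^ g) ^ s" for a :: real and g
      by (metis power_mult mult.commute)
    have "mpow \<xi> \<gamma> = M \<gamma> ^ s" for \<gamma>
    proof -
      have "mpow \<xi> \<gamma> = (\<Prod>i\<in>UNIV. (real (p i) ^ s) ^ \<gamma> i)" unfolding mpow_def \<xi>_def by simp
      also have "\<dots> = (\<Prod>i\<in>UNIV. (real (p i) ^ \<gamma> i) ^ s)" by (simp only: pc)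
      also have "\<dots> = (\<Prod>i\<in>UNIV. real (p i) ^ \<gamma> i) ^ s" by (simp only: prod_power_distrib)
      also have "\<dots> = M \<gamma> ^ s" unfolding M_def by (simp only: of_nat_prod of_nat_power)
      finally show ?thesis .
    qed
    then show ?thesis using assms(2)[OF pos] by simp
  qed
  then show ?thesis using vander_zero[OF assms(1) injM] by blast
qed



lemma mpow_scale: "mpow (c *\<^sub>R \<xi>) \<alpha> = c ^ mlen \<alpha> * mpow \<xi> \<alpha>"
  unfolding mpow_def mlen_def by (simp add: power_mult_distrib prod.distrib power_sum)

lemma symbol_scale: "principal_symbol A m x (c *\<^sub>R \<xi>) = c ^ m *\<^sub>R principal_symbol A m x \<xi>"
  unfolding principal_symbol_def by (simp add: mpow_scale scaleR_sum_right)

lemma lrank_scale: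
  fixes f :: "'a::euclidean_space \<Rightarrow>\<^sub>L 'b::euclidean_space"
  assumes "c \<noteq> 0" shows "lrank (c *\<^sub>R f) = lrank f"
proof -
  have "range (blinfun_apply (c *\<^sub>R f)) = range (blinfun_apply f)"
  proof
    show "range (blinfun_apply (c *\<^sub>R f)) \<subseteq> range (blinfun_apply f)"
    proof
      fix y assume "y \<in> range (blinfun_apply (c *\<^sub>R f))"
      then obtain x where "y = blinfun_apply (c *\<^sub>R f) x" by auto
      then have "y = blinfun_apply f (c *\<^sub>R x)" by (simp add: blinfun.scaleR_left blinfun.scaleR_right)
      then show "y \<in> range (blinfun_apply f)" by auto
    qed
    show "range (blinfun_apply f) \<subseteq> range (blinfun_apply (c *\<^sub>R f))"
    proof
      fix y assume "y \<in> range (blinfun_apply f)"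
      then obtain x where "y = blinfun_apply f x" by auto
      then have "y = blinfun_apply (c *\<^sub>R f) (inverse c *\<^sub>R x)"
        using assms by (simp add: blinfun.scaleR_right blinfun.scaleR_left)
      then show "y \<in> range (blinfun_apply (c *\<^sub>R f))" by auto
    qed
  qed
  then show ?thesis unfolding lrank_def by simp
qed

lemma symbol_cont:
  fixes A :: "('n::finite \<Rightarrow> nat) \<Rightarrow> real^'n \<Rightarrow> 'u::real_normed_vector \<Rightarrow>\<^sub>L 'v::real_normed_vector"
  assumes "continuous_on S X" "continuous_on S Z" "\<And>\<alpha>. mlen \<alpha> = m \<Longrightarrow> continuous_on UNIV (A \<alpha>)"
  shows "continuous_on S (\<lambda>t. principal_symbol A m (X t) (Z t))"
  unfolding principal_symbol_def
proof (intro continuous_on_sum continuous_on_scaleR)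
  fix \<alpha> :: "'n \<Rightarrow> nat" assume "\<alpha> \<in> {\<alpha>. mlen \<alpha> = m}"
  then show "continuous_on S (\<lambda>t. A \<alpha> (X t))"
    using continuous_on_compose2[OF assms(3) assms(1)] by auto
  show "continuous_on S (\<lambda>t. mpow (Z t) \<alpha>)" unfolding mpow_def
    by (intro continuous_intros assms(2))
qed

lemma path_rank:
  fixes F :: "real \<Rightarrow> 'u::euclidean_space \<Rightarrow>\<^sub>L 'v::euclidean_space"
    and G :: "real \<Rightarrow> 'c::euclidean_space \<Rightarrow>\<^sub>L 'w::euclidean_space"
  assumes "continuous_on {0..1} F" "continuous_on {0..1} G"
    "\<And>t. t \<in> {0..1} \<Longrightarrow> lrank (F t) + lrank (G t) = N"
  shows "lrank (F 0) = lrank (F 1)"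
proof -
  have "(\<lambda>t. lrank (F t)) constant_on {0..1}"
  proof (rule locally_constant_imp_constant)
    show "connected {0..1::real}" by simp
    fix a assume a: "a \<in> {0..1::real}"
    obtain d1 where d1: "d1 > 0" "\<forall>g. norm (g - F a) < d1 \<longrightarrow> lrank (F a) \<le> lrank g"
      using rank_lsc by blast
    obtain d2 where d2: "d2 > 0" "\<forall>g. norm (g - G a) < d2 \<longrightarrow> lrank (G a) \<le> lrank g"
      using rank_lsc by blast
    obtain e1 where e1: "e1 > 0" "\<forall>t\<in>{0..1}. dist t a < e1 \<longrightarrow> dist (F t) (F a) < d1"
      using assms(1) a d1(1) unfolding continuous_on_iff by blast
    obtain e2 where e2: "e2 > 0" "\<forall>t\<in>{0..1}. dist t a < e2 \<longrightarrow> dist (G t) (G a) < d2"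
      using assms(2) a d2(1) unfolding continuous_on_iff by blast
    define T where "T = {0..1::real} \<inter> ball a (min e1 e2)"
    have "openin (top_of_set {0..1}) T" unfolding T_def by auto
    moreover have "a \<in> T" unfolding T_def using a e1 e2 by auto
    moreover have "\<forall>t\<in>T. lrank (F t) = lrank (F a)"
    proof
      fix t assume "t \<in> T"
      then have t: "t \<in> {0..1}" "dist t a < e1" "dist t a < e2" unfolding T_def by (auto simp: dist_commute)
      have "lrank (F a) \<le> lrank (F t)" using d1 e1 t by (simp add: dist_norm)
      moreover have "lrank (G a) \<le> lrank (G t)" using d2 e2 t by (simp add: dist_norm)
      moreover have "lrank (F t) + lrank (G t) = lrank (F a) + lrank (G a)"
        using assms(3)[OF t(1)] assms(3)[OF a] by simp
      ultimately show "lrank (F t) = lrank (F a)" by linarith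
    qed
    ultimately show "\<exists>T. openin (top_of_set {0..1}) T \<and> a \<in> T \<and> (\<forall>x\<in>T. lrank (F x) = lrank (F a))"
      by blast
  qed
  then show ?thesis unfolding constant_on_def by force
qed

lemma segment_avoid:
  fixes z0 z :: "'a::real_vector"
  assumes "z0 \<noteq> 0" "z \<noteq> 0"
  shows "\<exists>z'. (z' = z \<or> z' = - z) \<and> (\<forall>t\<in>{0..1::real}. (1 - t) *\<^sub>R z0 + t *\<^sub>R z' \<noteq> 0)"
proof (cases "\<forall>t\<in>{0..1::real}. (1 - t) *\<^sub>R z0 + t *\<^sub>R z \<noteq> 0")
  case True then show ?thesis by blast
next
  case False
  then obtain t0 where t0: "t0 \<in> {0..1}" "(1 - t0) *\<^sub>R z0 + t0 *\<^sub>R z = 0" by auto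
  have "t0 \<noteq> 0" using t0 assms by auto
  define c where "c = (1 - t0) / t0"
  have c0: "c \<ge> 0" unfolding c_def using t0 by auto
  have zc: "z = - (c *\<^sub>R z0)"
  proof -
    have "t0 *\<^sub>R z = - ((1 - t0) *\<^sub>R z0)" using t0(2) by (simp add: eq_neg_iff_add_eq_0 add.commute)
    then have "inverse t0 *\<^sub>R (t0 *\<^sub>R z) = inverse t0 *\<^sub>R (- ((1 - t0) *\<^sub>R z0))" by simp
    then show ?thesis using \<open>t0 \<noteq> 0\<close> unfolding c_def by (simp add: divide_inverse mult.commute)
  qed
  have "c \<noteq> 0" using zc assms by auto
  show ?thesis
  proof (intro exI[of _ "- z"] conjI ballI)
    fix t :: real assume t: "t \<in> {0..1}"
    have pos: "(1 - t) + t * c > 0"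
    proof (cases "t = 1")
      case True then show ?thesis using c0 \<open>c \<noteq> 0\<close> by simp
    next
      case False then have "1 - t > 0" using t by auto
      moreover have "t * c \<ge> 0" using t c0 by simp
      ultimately show ?thesis by linarith
    qed
    have "(1 - t) *\<^sub>R z0 + t *\<^sub>R - z = ((1 - t) + t * c) *\<^sub>R z0" using zc by (simp add: algebra_simps)
    then show "(1 - t) *\<^sub>R z0 + t *\<^sub>R - z \<noteq> 0" using pos assms by simp
  qed simp
qed



lemma comp_symbol_zero:
  assumes "\<forall>\<gamma> x. mlen \<gamma> = 2 * m \<longrightarrow>
        (\<Sum>(\<alpha>, \<beta>)\<in>{(\<alpha>, \<beta>). (\<lambda>i. \<alpha> i + \<beta> i) = \<gamma> \<and> mlen \<alpha> = m \<and> mlen \<beta> = m}.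
            B \<beta> x o\<^sub>L A \<alpha> x) = 0"
  shows "principal_symbol B m x \<xi> o\<^sub>L principal_symbol A m x \<xi> = 0"
  unfolding symbol_comp using assms by (intro sum.neutral) auto

theorem mainTheorem2:
  fixes A :: "('n::finite \<Rightarrow> nat) \<Rightarrow> real^'n \<Rightarrow> 'u::euclidean_space \<Rightarrow>\<^sub>L 'v::euclidean_space"
    and B :: "('n \<Rightarrow> nat) \<Rightarrow> real^'n \<Rightarrow> 'v \<Rightarrow>\<^sub>L 'w::euclidean_space"
    and m :: nat
  assumes "m \<ge> 1"
    and "\<And>\<alpha>. mlen \<alpha> \<le> m \<Longrightarrow> continuous_on UNIV (A \<alpha>)"
    and "\<And>\<beta>. mlen \<beta> \<le> m \<Longrightarrow> continuous_on UNIV (B \<beta>)"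
  shows "elliptic_complex A B m \<longleftrightarrow>
    (comp_zero A B m \<and>
     (\<exists>y \<zeta>. \<zeta> \<noteq> 0 \<and> exact_at_mid (principal_symbol A m y \<zeta>) (principal_symbol B m y \<zeta>)) \<and>
     (\<forall>\<gamma> x. mlen \<gamma> = 2 * m \<longrightarrow>
        (\<Sum>(\<alpha>, \<beta>)\<in>{(\<alpha>, \<beta>). (\<lambda>i. \<alpha> i + \<beta> i) = \<gamma> \<and> mlen \<alpha> = m \<and> mlen \<beta> = m}.
            B \<beta> x o\<^sub>L A \<alpha> x) = 0) \<and>
     (\<exists>r. \<forall>x \<xi>. \<xi> \<noteq> 0 \<longrightarrow> lrank (principal_symbol A m x \<xi>) = r) \<and>
     (\<exists>r. \<forall>x \<xi>. \<xi> \<noteq> 0 \<longrightarrow> lrank (principal_symbol B m x \<xi>) = r))"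
    (is "?L \<longleftrightarrow> ?R")
proof
  assume ell: ?L
  have cz: "comp_zero A B m" using ell unfolding elliptic_complex_def by blast
  have ex: "\<And>x \<xi>. \<xi> \<noteq> 0 \<Longrightarrow> exact_at_mid (principal_symbol A m x \<xi>) (principal_symbol B m x \<xi>)"
    using ell unfolding elliptic_complex_def by blast
  have rsum: "lrank (principal_symbol A m x \<xi>) + lrank (principal_symbol B m x \<xi>) = DIM('v)"
    if "\<xi> \<noteq> 0" for x \<xi>
    using exact_iff[OF exact_comp[OF ex[OF that]]] ex[OF that] by blast
  obtain i0 :: 'n where True by blast
  define \<xi>0 :: "real^'n" where "\<xi>0 = axis i0 1"
  have \<xi>0: "\<xi>0 \<noteq> 0" unfolding \<xi>0_def by (simp add: axis_eq_0_iff)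
  have ii: "\<exists>y \<zeta>. \<zeta> \<noteq> 0 \<and> exact_at_mid (principal_symbol A m y \<zeta>) (principal_symbol B m y \<zeta>)"
    using ex \<xi>0 by blast
  have iii: "\<forall>\<gamma> x. mlen \<gamma> = 2 * m \<longrightarrow>
        (\<Sum>(\<alpha>, \<beta>)\<in>{(\<alpha>, \<beta>). (\<lambda>i. \<alpha> i + \<beta> i) = \<gamma> \<and> mlen \<alpha> = m \<and> mlen \<beta> = m}.
            B \<beta> x o\<^sub>L A \<alpha> x) = 0"
  proof (intro allI impI)
    fix \<gamma> :: "'n \<Rightarrow> nat" and x assume g: "mlen \<gamma> = 2 * m"
    have "\<forall>\<gamma>\<in>{\<gamma>. mlen \<gamma> = 2 * m}. (\<Sum>(\<alpha>, \<beta>)\<in>{(\<alpha>, \<beta>). (\<lambda>i. \<alpha> i + \<beta> i) = \<gamma> \<and> mlen \<alpha> = m \<and> mlen \<beta> = m}.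
            B \<beta> x o\<^sub>L A \<alpha> x) = 0"
    proof (rule coeff_zero[OF finite_mlen_eq])
      fix \<xi> :: "real^'n" assume pos: "\<forall>i. \<xi> $ i > 0"
      then have "\<xi> \<noteq> 0" by (metis less_irrefl zero_index)
      show "(\<Sum>\<gamma>\<in>{\<gamma>. mlen \<gamma> = 2 * m}. mpow \<xi> \<gamma> *\<^sub>R (\<Sum>(\<alpha>, \<beta>)\<in>{(\<alpha>, \<beta>). (\<lambda>i. \<alpha> i + \<beta> i) = \<gamma> \<and> mlen \<alpha> = m \<and> mlen \<beta> = m}.
            B \<beta> x o\<^sub>L A \<alpha> x)) = 0"
        using exact_comp[OF ex[OF \<open>\<xi> \<noteq> 0\<close>, of x]] unfolding symbol_comp .
    qed
    then show "(\<Sum>(\<alpha>, \<beta>)\<in>{(\<alpha>, \<beta>). (\<lambda>i. \<alpha> i + \<beta> i) = \<gamma> \<and> mlen \<alpha> = m \<and> mlen \<beta> = m}.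
            B \<beta> x o\<^sub>L A \<alpha> x) = 0" using g by blast
  qed
  define Z where "Z x \<xi> t = (1 - t) *\<^sub>R \<xi>0 + t *\<^sub>R (\<xi> :: real^'n)" for x :: "real^'n" and \<xi> t
  have constr: "lrank (principal_symbol A m x \<xi>) = lrank (principal_symbol A m 0 \<xi>0) \<and>
                lrank (principal_symbol B m x \<xi>) = lrank (principal_symbol B m 0 \<xi>0)"
    if nz: "\<xi> \<noteq> 0" for x \<xi>
  proof -
    obtain \<xi>' where \<xi>': "\<xi>' = \<xi> \<or> \<xi>' = - \<xi>" "\<forall>t\<in>{0..1::real}. (1 - t) *\<^sub>R \<xi>0 + t *\<^sub>R \<xi>' \<noteq> 0"
      using segment_avoid[OF \<xi>0 nz] by blast
    have sc: "lrank (principal_symbol C m x \<xi>') = lrank (principal_symbol C m x \<xi>)"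
      for C :: "('n \<Rightarrow> nat) \<Rightarrow> real^'n \<Rightarrow> 'a::euclidean_space \<Rightarrow>\<^sub>L 'b::euclidean_space"
    proof (cases "\<xi>' = \<xi>")
      case False
      then have "\<xi>' = (-1) *\<^sub>R \<xi>" using \<xi>'(1) by simp
      then have "principal_symbol C m x \<xi>' = (-1) ^ m *\<^sub>R principal_symbol C m x \<xi>"
        by (simp only: symbol_scale)
      moreover have "(-1::real) ^ m \<noteq> 0" by simp
      ultimately show ?thesis by (metis lrank_scale)
    qed simp
    define X where "X t = t *\<^sub>R x" for t :: real
    define W where "W t = (1 - t) *\<^sub>R \<xi>0 + t *\<^sub>R \<xi>'" for t :: real
    have cX: "continuous_on {0..1} X" unfolding X_def by (intro continuous_intros)
    have cW: "continuous_on {0..1} W" unfolding W_def by (intro continuous_intros)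
    have cF: "continuous_on {0..1} (\<lambda>t. principal_symbol A m (X t) (W t))"
      by (rule symbol_cont[OF cX cW]) (use assms(2) in auto)
    have cG: "continuous_on {0..1} (\<lambda>t. principal_symbol B m (X t) (W t))"
      by (rule symbol_cont[OF cX cW]) (use assms(3) in auto)
    have rs: "lrank (principal_symbol A m (X t) (W t)) + lrank (principal_symbol B m (X t) (W t)) = DIM('v)"
      if "t \<in> {0..1}" for t
      using rsum \<xi>'(2) that unfolding W_def by blast
    have "lrank (principal_symbol A m (X 0) (W 0)) = lrank (principal_symbol A m (X 1) (W 1))"
      by (rule path_rank[OF cF cG rs])
    moreover have "lrank (principal_symbol B m (X 0) (W 0)) = lrank (principal_symbol B m (X 1) (W 1))"
      by (rule path_rank[OF cG cF]) (use rs in \<open>simp add: add.commute\<close>)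
    ultimately show ?thesis using sc[of A] sc[of B] unfolding X_def W_def by simp
  qed
  show ?R using cz ii iii constr by blast
next
  assume R: ?R
  then have cz: "comp_zero A B m"
    and ii: "\<exists>y \<zeta>. \<zeta> \<noteq> 0 \<and> exact_at_mid (principal_symbol A m y \<zeta>) (principal_symbol B m y \<zeta>)"
    and iii: "\<forall>\<gamma> x. mlen \<gamma> = 2 * m \<longrightarrow>
        (\<Sum>(\<alpha>, \<beta>)\<in>{(\<alpha>, \<beta>). (\<lambda>i. \<alpha> i + \<beta> i) = \<gamma> \<and> mlen \<alpha> = m \<and> mlen \<beta> = m}.
            B \<beta> x o\<^sub>L A \<alpha> x) = 0"
    by blast+
  obtain r1 where r1: "\<forall>x \<xi>. \<xi> \<noteq> 0 \<longrightarrow> lrank (principal_symbol A m x \<xi>) = r1" using R by blast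
  obtain r2 where r2: "\<forall>x \<xi>. \<xi> \<noteq> 0 \<longrightarrow> lrank (principal_symbol B m x \<xi>) = r2" using R by blast
  obtain y \<zeta> where yz: "\<zeta> \<noteq> 0" "exact_at_mid (principal_symbol A m y \<zeta>) (principal_symbol B m y \<zeta>)"
    using ii by blast
  have cs: "principal_symbol B m x \<xi> o\<^sub>L principal_symbol A m x \<xi> = 0" for x \<xi>
    using comp_symbol_zero[OF iii] .
  have "r1 + r2 = DIM('v)" using exact_iff[OF cs, of y \<zeta>] yz r1 r2 by simp
  then have "\<forall>x \<xi>. \<xi> \<noteq> 0 \<longrightarrow> exact_at_mid (principal_symbol A m x \<xi>) (principal_symbol B m x \<xi>)"
    using exact_iff[OF cs] r1 r2 by simp
  then show ?L using cz unfolding elliptic_complex_def by blast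
qed


end
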